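(* Let $K\ge1$, let $P^0,P^1,\ldots,P^K$ be real polynomials and $c_1,\ldots,c_K$ real constants, and let \[ F(x)=P^0(x)+\sum_{j=1}^K P^j(x)\frac{1}{\sqrt{x+c_j}}, \] considered on the interval $(-\min_j c_j,\infty)$, and assume $F$ is not identically zero there. Then the number $\mathcal Z(F)$ of real zeros of $F$ in this interval, counted with multiplicity, satisfies \[ \mathcal Z(F)\le K\left(\max_{j=1,\ldots,K}\deg(P^j)+1\right)+\deg(P^0), \] with the convention $\deg(0)=-1$. *)

theory Defs
  imports "HOL-Analysis.Analysis" "HOL-Computational_Algebra.Polynomial" "HOL-Library.Extended_Nat"
begin

definition deg :: "real poly \<Rightarrow> int" where
  "deg p = (if p = 0 then -1 else int (degree p))"

definition zero_mult :: "(real \<Rightarrow> real) \<Rightarrow> real \<Rightarrow> enat" where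
  "zero_mult f x = Sup (enat ` {m. \<forall>k<m. (deriv ^^ k) f x = 0})"

definition num_zeros :: "(real \<Rightarrow> real) \<Rightarrow> real set \<Rightarrow> enat" where
  "num_zeros f I = (if finite {x \<in> I. f x = 0}
      then (\<Sum>x\<in>{x \<in> I. f x = 0}. zero_mult f x) else \<infinity>)"

end

theory Submission
  imports Defs
begin

lemma higher_deriv_seq:
  assumes "open J" "\<forall>k. \<forall>x\<in>J. (g k has_real_derivative g (Suc k) x) (at x)"
  shows "\<forall>x\<in>J. (deriv^^k) (g 0) x = g k x"
proof (induction k)
  case 0 then show ?case by simp
next
  case (Suc k)
  show ?case
  proof
    fix x assume x: "x \<in> J"
    have ev: "eventually (\<lambda>y. (deriv^^k) (g 0) y = g k y) (nhds x)"
      using eventually_nhds_in_open[OF assms(1) x] Suc by (auto elim: eventually_mono)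
    have "(deriv^^Suc k) (g 0) x = deriv ((deriv^^k) (g 0)) x" by simp
    also have "\<dots> = deriv (g k) x" by (rule deriv_cong_ev[OF ev refl])
    also have "\<dots> = g (Suc k) x" using assms(2) x by (simp add: DERIV_imp_deriv)
    finally show "(deriv^^Suc k) (g 0) x = g (Suc k) x" .
  qed
qed

lemma higher_deriv_cong:
  assumes "open J" "\<forall>x\<in>J. f x = g x"
  shows "\<forall>x\<in>J. (deriv^^k) f x = (deriv^^k) g x"
proof (induction k)
  case 0 then show ?case using assms by simp
next
  case (Suc k)
  show ?case
  proof
    fix x assume x: "x \<in> J"
    have ev: "eventually (\<lambda>y. (deriv^^k) f y = (deriv^^k) g y) (nhds x)"
      using eventually_nhds_in_open[OF assms(1) x] Suc by (auto elim: eventually_mono)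
    show "(deriv^^Suc k) f x = (deriv^^Suc k) g x"
      using deriv_cong_ev[OF ev refl] by simp
  qed
qed

lemma num_zeros_cong:
  assumes "open J" "\<forall>x\<in>J. f x = g x"
  shows "num_zeros f J = num_zeros g J"
proof -
  have Z: "{x \<in> J. f x = 0} = {x \<in> J. g x = 0}" using assms by auto
  have "\<forall>x\<in>J. zero_mult f x = zero_mult g x"
    using higher_deriv_cong[OF assms] unfolding zero_mult_def by auto
  then have "(\<Sum>x\<in>{x \<in> J. f x = 0}. zero_mult f x) = (\<Sum>x\<in>{x \<in> J. g x = 0}. zero_mult g x)"
    unfolding Z by (intro sum.cong) auto
  then show ?thesis unfolding num_zeros_def Z by simp
qed

lemma zero_mult_nonzero:
  assumes "f x \<noteq> 0" shows "zero_mult f x = 0"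
proof -
  have "{m. \<forall>k<m. (deriv^^k) f x = 0} = {0}"
  proof (rule set_eqI)
    fix m show "m \<in> {m. \<forall>k<m. (deriv^^k) f x = 0} \<longleftrightarrow> m \<in> {0}"
    proof
      assume "m \<in> {m. \<forall>k<m. (deriv^^k) f x = 0}"
      then have "\<forall>k<m. (deriv^^k) f x = 0" by simp
      then show "m \<in> {0}" using assms by (cases m) (auto dest: spec[of _ 0])
    qed simp
  qed
  then show ?thesis unfolding zero_mult_def by (simp add: zero_enat_def)
qed

lemma zero_mult_ge1:
  assumes "f x = 0" shows "1 \<le> zero_mult f x"
proof -
  have "(1::nat) \<in> {m. \<forall>k<m. (deriv^^k) f x = 0}" using assms by auto
  then have "enat 1 \<le> zero_mult f x" unfolding zero_mult_def by (intro Sup_upper) auto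
  then show ?thesis by (simp add: one_enat_def)
qed

lemma zero_mult_step:
  assumes "open J" "x \<in> J"
    and g: "\<forall>k. \<forall>x\<in>J. (g k has_real_derivative g (Suc k) x) (at x)"
    and hs: "\<forall>k. \<forall>x\<in>J. (hs k has_real_derivative hs (Suc k) x) (at x)"
    and rel: "\<And>k. hs k x = u k * g (Suc k) x + v k * g k x"
  shows "zero_mult (g 0) x \<le> zero_mult (hs 0) x + 1"
proof -
  have G: "\<And>k. (deriv^^k) (g 0) x = g k x" using higher_deriv_seq[OF assms(1) g] assms(2) by blast
  have H: "\<And>k. (deriv^^k) (hs 0) x = hs k x" using higher_deriv_seq[OF assms(1) hs] assms(2) by blast
  show ?thesis unfolding zero_mult_def G H
  proof (rule Sup_least)
    fix y assume "y \<in> enat ` {m. \<forall>k<m. g k x = 0}"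
    then obtain m where y: "y = enat m" and m: "\<forall>k<m. g k x = 0" by auto
    show "y \<le> Sup (enat ` {m. \<forall>k<m. hs k x = 0}) + 1"
    proof (cases m)
      case 0 then show ?thesis using y by (simp add: zero_enat_def[symmetric])
    next
      case (Suc m')
      have "\<forall>k<m'. hs k x = 0" using m rel Suc by auto
      then have "enat m' \<le> Sup (enat ` {m. \<forall>k<m. hs k x = 0})" by (intro Sup_upper) auto
      then have "enat m' + 1 \<le> Sup (enat ` {m. \<forall>k<m. hs k x = 0}) + 1" by (rule add_right_mono)
      then show ?thesis using y Suc by (simp add: eSuc_enat[symmetric] eSuc_plus_1)
    qed
  qed
qed

lemma between_set:
  fixes Zf Zh :: "real set"
  assumes btw: "\<forall>x\<in>Zf. \<forall>y\<in>Zf. x<y \<longrightarrow> (\<exists>z\<in>Zh. x<z \<and> z<y)"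
  shows "finite S \<Longrightarrow> S \<subseteq> Zf \<Longrightarrow> card S = Suc n \<Longrightarrow>
    \<exists>T. finite T \<and> T \<subseteq> Zh \<and> T \<inter> S = {} \<and> card T = n \<and> (\<forall>t\<in>T. Min S < t \<and> t < Max S)"
proof (induction n arbitrary: S)
  case 0 then show ?case by (intro exI[of _ "{}"]) auto
next
  case (Suc n)
  define M where "M = Max S"
  define S' where "S' = S - {M}"
  have Sne: "S \<noteq> {}" using Suc.prems by auto
  have MS: "M \<in> S" unfolding M_def using Suc.prems Sne by auto
  have cS': "card S' = Suc n" unfolding S'_def using Suc.prems MS by simp
  have fS': "finite S'" unfolding S'_def using Suc.prems by simp
  have S'ne: "S' \<noteq> {}" using cS' by auto
  obtain T' where T': "finite T'" "T' \<subseteq> Zh" "T' \<inter> S' = {}" "card T' = n"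
    "\<forall>t\<in>T'. Min S' < t \<and> t < Max S'"
    using Suc.IH[OF fS' _ cS'] Suc.prems(2) unfolding S'_def by blast
  have mS': "Max S' \<in> S'" using fS' S'ne by simp
  have lt: "Max S' < M"
    using mS' Suc.prems(1) unfolding S'_def M_def by (simp add: order_less_le)
  obtain z where z: "z \<in> Zh" "Max S' < z" "z < M"
    using btw mS' MS lt Suc.prems(2) unfolding S'_def by blast
  have minle: "Min S \<le> Min S'" using fS' S'ne S'_def Suc.prems(1) by (intro Min_antimono) auto
  have minS': "Min S' \<le> Max S'" using fS' S'ne by simp
  have zT': "z \<notin> T'" using T'(5) z(2) by force
  have zS: "z \<notin> S"
  proof
    assume "z \<in> S"
    then have "z = M \<or> z \<in> S'" unfolding S'_def by auto
    then show False using z fS' by (auto dest: Max_ge)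
  qed
  have MT': "M \<notin> T'" using T'(5) lt by force
  show ?case
  proof (intro exI[of _ "insert z T'"] conjI)
    show "finite (insert z T')" using T' by simp
    show "insert z T' \<subseteq> Zh" using T' z by simp
    show "insert z T' \<inter> S = {}" using T'(3) zS MT' unfolding S'_def by blast
    show "card (insert z T') = Suc n" using T' zT' by simp
    show "\<forall>t\<in>insert z T'. Min S < t \<and> t < Max S"
      using T'(5) z minle minS' lt unfolding M_def[symmetric] by force
  qed
qed

lemma count_le:
  fixes f h :: "real \<Rightarrow> real"
  assumes mult: "\<forall>x\<in>J. f x = 0 \<longrightarrow> zero_mult f x \<le> zero_mult h x + 1"
    and btw: "\<forall>x\<in>J. \<forall>y\<in>J. x<y \<longrightarrow> f x = 0 \<longrightarrow> f y = 0 \<longrightarrow> (\<exists>z\<in>J. x<z \<and> z<y \<and> h z = 0)"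
  shows "num_zeros f J \<le> num_zeros h J + 1"
proof -
  define Zf where "Zf = {x \<in> J. f x = 0}"
  define Zh where "Zh = {x \<in> J. h x = 0}"
  have btw': "\<forall>x\<in>Zf. \<forall>y\<in>Zf. x<y \<longrightarrow> (\<exists>z\<in>Zh. x<z \<and> z<y)"
  proof (intro ballI impI)
    fix x y assume xy: "x \<in> Zf" "y \<in> Zf" "x < y"
    then obtain z where "z \<in> J" "x<z" "z<y" "h z = 0"
      using btw unfolding Zf_def by blast
    then show "\<exists>z\<in>Zh. x<z \<and> z<y" unfolding Zh_def by blast
  qed
  note BS = between_set[OF btw']
  show ?thesis
  proof (cases "finite Zh")
    case False
    then show ?thesis unfolding num_zeros_def Zh_def[symmetric] by simp
  next
    case finh: True
    have finf: "finite Zf"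
    proof (rule ccontr)
      assume "\<not> finite Zf"
      then obtain S where S: "finite S" "card S = Suc (Suc (card Zh))" "S \<subseteq> Zf"
        using infinite_arbitrarily_large by blast
      then obtain T where T: "T \<subseteq> Zh" "card T = Suc (card Zh)" using BS[OF S(1) S(3) S(2)] by blast
      then show False using card_mono[OF finh T(1)] T(2) by simp
    qed
    show ?thesis
    proof (cases "Zf = {}")
      case True
      then show ?thesis unfolding num_zeros_def Zf_def[symmetric] using finf by simp
    next
      case False
      then obtain n where cn: "card Zf = Suc n" using finf by (cases "card Zf") auto
      then obtain T where T: "finite T" "T \<subseteq> Zh" "T \<inter> Zf = {}" "card T = n"
        using BS[OF finf order_refl cn] by blast
      have h0: "\<forall>x\<in>Zf - Zh. zero_mult h x = 0"
        unfolding Zf_def Zh_def using zero_mult_nonzero by auto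
      have "(\<Sum>x\<in>Zf. zero_mult f x) \<le> (\<Sum>x\<in>Zf. zero_mult h x + 1)"
        using mult unfolding Zf_def by (intro sum_mono) auto
      also have "\<dots> = (\<Sum>x\<in>Zf. zero_mult h x) + of_nat (card Zf)"
        by (simp add: sum.distrib)
      also have "(\<Sum>x\<in>Zf. zero_mult h x) = (\<Sum>x\<in>Zf \<inter> Zh. zero_mult h x)"
        using h0 finf by (intro sum.mono_neutral_right) auto
      also have "of_nat (card Zf) = of_nat (card T) + (1::enat)" using cn T(4) by simp
      also have "(\<Sum>x\<in>Zf \<inter> Zh. zero_mult h x) + (of_nat (card T) + 1)
          = ((\<Sum>x\<in>Zf \<inter> Zh. zero_mult h x) + (\<Sum>x\<in>T. 1)) + 1"
        by (simp add: add.assoc)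
      also have "(\<Sum>x\<in>T. 1) \<le> (\<Sum>x\<in>T. zero_mult h x)"
        using T(2) zero_mult_ge1 unfolding Zh_def by (intro sum_mono) auto
      also have "(\<Sum>x\<in>Zf \<inter> Zh. zero_mult h x) + (\<Sum>x\<in>T. zero_mult h x) = (\<Sum>x\<in>(Zf \<inter> Zh) \<union> T. zero_mult h x)"
        using T finf by (intro sum.union_disjoint[symmetric]) auto
      also have "\<dots> \<le> (\<Sum>x\<in>Zh. zero_mult h x)"
        using T finh by (intro sum_mono2) auto
      finally show ?thesis unfolding num_zeros_def Zf_def[symmetric] Zh_def[symmetric]
        using finf finh by (simp add: add_right_mono)
    qed
  qed
qed

lemma rolle_step:
  fixes g :: "nat \<Rightarrow> real \<Rightarrow> real" and p \<alpha> \<beta> d :: real and H :: "real \<Rightarrow> real"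
  assumes g: "\<forall>k. \<forall>x\<in>{p<..}. (g k has_real_derivative g (Suc k) x) (at x)"
    and pos: "\<forall>x\<in>{p<..}. \<alpha>*x+\<beta> > 0"
    and H: "\<forall>x\<in>{p<..}. H x = (\<alpha>*x+\<beta>) * g 1 x - d*\<alpha>*g 0 x"
  shows "num_zeros (g 0) {p<..} \<le> num_zeros H {p<..} + 1"
    and "(\<forall>x\<in>{p<..}. H x = 0) \<Longrightarrow> x \<in> {p<..} \<Longrightarrow> y \<in> {p<..} \<Longrightarrow> g 0 x = 0 \<Longrightarrow> g 0 y = 0"
proof -
  define J where "J = {p<..}"
  have oJ: "open J" unfolding J_def by simp
  define w where "w x = exp (-d * ln (\<alpha>*x+\<beta>))" for x
  define W where "W x = w x * g 0 x" for x
  have wpos: "w x > 0" for x unfolding w_def by simp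
  have dW: "(W has_real_derivative w x / (\<alpha>*x+\<beta>) * H x) (at x)" if x: "x \<in> J" for x
  proof -
    have l: "\<alpha>*x+\<beta> > 0" using pos x unfolding J_def by auto
    have "(w has_real_derivative w x * (-d * (\<alpha> / (\<alpha>*x+\<beta>)))) (at x)"
      unfolding w_def using l
      by (auto intro!: derivative_eq_intros simp: field_simps)
    then have "(W has_real_derivative w x * (-d * (\<alpha> / (\<alpha>*x+\<beta>))) * g 0 x + w x * g 1 x) (at x)"
      unfolding W_def using g x unfolding J_def
      by (auto intro!: derivative_eq_intros)
    moreover have "w x * (-d * (\<alpha> / (\<alpha>*x+\<beta>))) * g 0 x + w x * g 1 x = w x / (\<alpha>*x+\<beta>) * H x"
    proof -
      have Hx: "H x = (\<alpha>*x+\<beta>) * g 1 x - d*\<alpha>*g 0 x" using H x unfolding J_def by blast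
      show ?thesis using l unfolding Hx by (simp add: field_simps)
    qed
    ultimately show ?thesis by simp
  qed
  have mvt: "\<exists>z. a < z \<and> z < b \<and> W b - W a = (b - a) * (w z / (\<alpha>*z+\<beta>) * H z)"
    if "a \<in> J" "b \<in> J" "a < b" for a b
  proof (rule MVT2[OF \<open>a<b\<close>])
    fix z assume "a \<le> z" "z \<le> b"
    then have "z \<in> J" using that unfolding J_def by auto
    then show "(W has_real_derivative w z / (\<alpha>*z+\<beta>) * H z) (at z)" by (rule dW)
  qed
  define hs where "hs k x = (\<alpha>*x+\<beta>) * g (Suc k) x + (real k * \<alpha> - d*\<alpha>) * g k x" for k x
  have hs: "\<forall>k. \<forall>x\<in>J. (hs k has_real_derivative hs (Suc k) x) (at x)"
  proof (intro allI ballI)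
    fix k x assume x: "x \<in> J"
    have "(hs k has_real_derivative \<alpha> * g (Suc k) x + (\<alpha>*x+\<beta>) * g (Suc (Suc k)) x
        + (real k * \<alpha> - d*\<alpha>) * g (Suc k) x) (at x)"
      unfolding hs_def using g x unfolding J_def
      by (auto intro!: derivative_eq_intros)
    then show "(hs k has_real_derivative hs (Suc k) x) (at x)"
      unfolding hs_def by (simp add: algebra_simps)
  qed
  have Hhs: "\<forall>x\<in>J. H x = hs 0 x" using H unfolding hs_def J_def by simp
  have mult: "\<forall>x\<in>J. g 0 x = 0 \<longrightarrow> zero_mult (g 0) x \<le> zero_mult H x + 1"
  proof (intro ballI impI)
    fix x assume x: "x \<in> J"
    have "zero_mult (g 0) x \<le> zero_mult (hs 0) x + 1"
      by (rule zero_mult_step[OF oJ x g[folded J_def] hs, of "\<lambda>k. \<alpha>*x+\<beta>" "\<lambda>k. real k * \<alpha> - d*\<alpha>"])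
        (simp add: hs_def)
    moreover have "zero_mult H x = zero_mult (hs 0) x"
      using higher_deriv_cong[OF oJ Hhs] x unfolding zero_mult_def by auto
    ultimately show "zero_mult (g 0) x \<le> zero_mult H x + 1" by simp
  qed
  have btw: "\<forall>x\<in>J. \<forall>y\<in>J. x<y \<longrightarrow> g 0 x = 0 \<longrightarrow> g 0 y = 0 \<longrightarrow> (\<exists>z\<in>J. x<z \<and> z<y \<and> H z = 0)"
  proof (intro ballI impI)
    fix x y assume xy: "x \<in> J" "y \<in> J" "x < y" "g 0 x = 0" "g 0 y = 0"
    obtain z where z: "x < z" "z < y" "W y - W x = (y - x) * (w z / (\<alpha>*z+\<beta>) * H z)"
      using mvt[OF xy(1,2,3)] by blast
    have zJ: "z \<in> J" using z xy unfolding J_def by auto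
    have "\<alpha>*z+\<beta> > 0" using pos zJ unfolding J_def by auto
    then have "H z = 0" using z xy wpos[of z] unfolding W_def by simp
    then show "\<exists>z\<in>J. x<z \<and> z<y \<and> H z = 0" using zJ z by blast
  qed
  show "num_zeros (g 0) {p<..} \<le> num_zeros H {p<..} + 1"
    using count_le[OF mult btw] unfolding J_def .
  assume H0: "\<forall>x\<in>{p<..}. H x = 0" and xy: "x \<in> {p<..}" "y \<in> {p<..}" "g 0 x = 0"
  have "W y = W x"
  proof (cases x y rule: linorder_cases)
    case less
    then show ?thesis using mvt[of x y] xy H0 unfolding J_def by force
  next
    case greater
    then show ?thesis using mvt[of y x] xy H0 unfolding J_def by force
  qed simp
  then show "g 0 y = 0" using xy wpos[of y] unfolding W_def by simp
qed

definition fc :: "nat \<Rightarrow> (nat \<Rightarrow> real poly) \<Rightarrow> (nat\<Rightarrow>real) \<Rightarrow> (nat\<Rightarrow>real) \<Rightarrow> (nat\<Rightarrow>nat) \<Rightarrow> real \<Rightarrow> real \<Rightarrow> real" where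
  "fc n A a b m d t = (\<Sum>i<n. poly (A i) t * (a i * t + b i) powr (d + 1 - real (m i)))"

definition Dop :: "(nat \<Rightarrow> real poly) \<Rightarrow> (nat\<Rightarrow>real) \<Rightarrow> (nat\<Rightarrow>real) \<Rightarrow> (nat\<Rightarrow>nat) \<Rightarrow> real \<Rightarrow> nat \<Rightarrow> real poly" where
  "Dop A a b m d i = pderiv (A i) * [:b i, a i:] + smult ((d + 1 - real (m i)) * a i) (A i)"

lemma powr_m1: "(x::real) > 0 \<Longrightarrow> x powr e = x * x powr (e - 1)"
  by (simp add: powr_diff)

lemma fc_deriv:
  assumes "\<forall>i<n. a i * t + b i > 0"
  shows "(fc n A a b m d has_real_derivative fc n (Dop A a b m d) a b m (d-1) t) (at t)"
proof -
  have "((\<lambda>t. poly (A i) t * (a i * t + b i) powr (d + 1 - real (m i))) has_real_derivative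
      poly (Dop A a b m d i) t * (a i * t + b i) powr ((d-1) + 1 - real (m i))) (at t)" if i: "i < n" for i
  proof -
    have l: "a i * t + b i > 0" using assms i by blast
    have "((\<lambda>t. poly (A i) t * (a i * t + b i) powr (d + 1 - real (m i))) has_real_derivative
      poly (A i) t * ((d + 1 - real (m i)) * (a i * t + b i) powr (d + 1 - real (m i) - of_nat 1) * (a i * 1 + 0)) +
      poly (pderiv (A i)) t * (a i * t + b i) powr (d + 1 - real (m i))) (at t)"
    proof -
      have d1: "((\<lambda>t. a i * t + b i) has_real_derivative a i * 1 + 0) (at t)"
        by (intro derivative_intros DERIV_cmult DERIV_ident)
      show ?thesis by (rule DERIV_mult'[OF poly_DERIV DERIV_fun_powr[OF d1 l]])
    qed
    moreover have "poly (A i) t * ((d + 1 - real (m i)) * (a i * t + b i) powr (d + 1 - real (m i) - of_nat 1) * (a i * 1 + 0)) +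
      poly (pderiv (A i)) t * (a i * t + b i) powr (d + 1 - real (m i))
      = poly (Dop A a b m d i) t * (a i * t + b i) powr ((d-1) + 1 - real (m i))"
      unfolding Dop_def using powr_m1[OF l, of "d + 1 - real (m i)"]
      by (simp add: algebra_simps)
    ultimately show ?thesis by simp
  qed
  then show ?thesis unfolding fc_def[abs_def] by (intro DERIV_sum) auto
qed

definition degOK :: "real poly \<Rightarrow> nat \<Rightarrow> bool" where
  "degOK p k \<longleftrightarrow> p = 0 \<or> degree p < k"

lemma lin_mult: "[:b, a:] * p = smult b p + pCons 0 (smult a p)"
  by simp

lemma coeff_lin_Suc: "coeff ([:b, a:] * p) (Suc n) = b * coeff p (Suc n) + a * coeff p n"
  by (simp add: lin_mult)

lemma coeff_lin_0: "coeff ([:b, a:] * p) 0 = b * coeff p 0"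
  by (simp add: lin_mult)

lemma degree_lin_mult: "degree ([:b, a:] * p) \<le> degree p + 1"
proof -
  have "degree ([:b, a:] * p) \<le> degree [:b,a:] + degree p" by (rule degree_mult_le)
  moreover have "degree [:b, a:] \<le> 1" by simp
  ultimately show ?thesis by simp
qed

lemma degOK_of: "degree p \<le> n \<Longrightarrow> coeff p n = 0 \<Longrightarrow> degOK p n"
  unfolding degOK_def
  by (metis leading_coeff_0_iff le_neq_implies_less)

lemma degOK_Dop:
  assumes "degOK A k"
  shows "degOK (pderiv A * [:b, a:] + smult c A) k"
proof (cases "A = 0")
  case True then show ?thesis by (simp add: degOK_def)
next
  case False
  then have dk: "degree A < k" using assms by (simp add: degOK_def)
  have "degree (pderiv A * [:b, a:]) \<le> degree A"
  proof (cases "degree A = 0")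
    case True
    then have "pderiv A = 0" by (simp add: pderiv_eq_0_iff)
    then show ?thesis by simp
  next
    case False
    have "degree ([:b, a:] * pderiv A) \<le> degree (pderiv A) + 1" by (rule degree_lin_mult)
    then show ?thesis using False by (simp add: degree_pderiv mult.commute)
  qed
  moreover have "degree (smult c A) \<le> degree A" by (rule degree_smult_le)
  ultimately have "degree (pderiv A * [:b, a:] + smult c A) \<le> degree A" by (rule degree_add_le)
  then show ?thesis using dk by (simp add: degOK_def)
qed

lemma degOK_le: "degOK p (Suc j) \<Longrightarrow> degree p \<le> j"
  unfolding degOK_def by auto

lemma coeff_pderiv_lin:
  assumes "degree A \<le> j"
  shows "coeff (pderiv A * [:b, a:]) j = a * real j * coeff A j"
proof (cases j)
  case 0
  have "coeff A 1 = 0" using assms 0 by (simp add: coeff_eq_0)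
  then show ?thesis using 0 by (simp add: mult.commute[of _ "[:b,a:]"] coeff_lin_0 coeff_pderiv)
next
  case (Suc i)
  have "coeff A (Suc (Suc i)) = 0" using assms Suc by (simp add: coeff_eq_0)
  then show ?thesis using Suc
    by (simp add: mult.commute[of _ "[:b,a:]"] coeff_lin_Suc coeff_pderiv algebra_simps)
qed

lemma degOK_B:
  assumes "degOK A k"
  shows "degOK ([:\<beta>, \<alpha>:] * (pderiv A * [:b, a:] + smult ((d + 1 - real k) * a) A) - smult (d*\<alpha>) (A * [:b, a:])) k"
proof (cases "A = 0")
  case True then show ?thesis by (simp add: degOK_def)
next
  case False
  then obtain j where kj: "k = Suc j" using assms by (cases k) (auto simp: degOK_def)
  have dA: "degree A \<le> j" using assms kj degOK_le by blast
  define Q where "Q = pderiv A * [:b, a:] + smult ((d + 1 - real k) * a) A"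
  have dQ: "degree Q \<le> j" using degOK_Dop[OF assms] kj degOK_le unfolding Q_def by blast
  have d1: "degree ([:\<beta>, \<alpha>:] * Q) \<le> Suc j" using degree_lin_mult[of \<beta> \<alpha> Q] dQ by simp
  have d2: "degree (smult (d*\<alpha>) (A * [:b, a:])) \<le> Suc j"
    using degree_lin_mult[of b a A] dA degree_smult_le[of "d*\<alpha>" "A * [:b, a:]"]
    by (simp add: mult.commute)
  have c1: "coeff Q (Suc j) = 0" using dQ by (simp add: coeff_eq_0)
  have c2: "coeff Q j = a * real j * coeff A j + (d + 1 - real k) * a * coeff A j"
    unfolding Q_def using coeff_pderiv_lin[OF dA] by simp
  have cA: "coeff A (Suc j) = 0" using dA by (simp add: coeff_eq_0)
  have c3: "coeff (A * [:b, a:]) (Suc j) = a * coeff A j"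
    using cA by (simp add: mult.commute[of A] coeff_lin_Suc)
  have "coeff ([:\<beta>, \<alpha>:] * Q - smult (d*\<alpha>) (A * [:b, a:])) (Suc j) = 0"
    unfolding coeff_diff coeff_smult coeff_lin_Suc c1 c2 c3 by (simp add: kj algebra_simps)
  then have "degOK ([:\<beta>, \<alpha>:] * Q - smult (d*\<alpha>) (A * [:b, a:])) (Suc j)"
    by (intro degOK_of degree_diff_le d1 d2)
  then show ?thesis unfolding Q_def kj .
qed

lemma degOK_C:
  assumes "degOK A k"
  shows "degOK (pderiv A * [:\<beta>, \<alpha>:] - smult (real (k - 1) * \<alpha>) A) (k - 1)"
proof (cases "A = 0")
  case True then show ?thesis by (simp add: degOK_def)
next
  case False
  then obtain j where kj: "k = Suc j" using assms by (cases k) (auto simp: degOK_def)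
  have dA: "degree A \<le> j" using assms kj degOK_le by blast
  show ?thesis
  proof (cases j)
    case 0
    then have "pderiv A = 0" using dA by (simp add: pderiv_eq_0_iff)
    then show ?thesis using kj 0 by (simp add: degOK_def)
  next
    case (Suc i)
    have "degree (pderiv A * [:\<beta>, \<alpha>:]) \<le> degree (pderiv A) + 1"
      using degree_lin_mult[of \<beta> \<alpha> "pderiv A"] by (simp only: mult.commute)
    then have d1: "degree (pderiv A * [:\<beta>, \<alpha>:]) \<le> j"
      using dA Suc unfolding degree_pderiv by linarith
    have d2: "degree (smult (real (k - 1) * \<alpha>) A) \<le> j" using dA degree_smult_le order_trans by blast
    have cc: "coeff (pderiv A * [:\<beta>, \<alpha>:]) j = \<alpha> * real j * coeff A j"
      by (rule coeff_pderiv_lin[OF dA])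
    have "coeff (pderiv A * [:\<beta>, \<alpha>:] - smult (real (k - 1) * \<alpha>) A) j = 0"
      unfolding coeff_diff coeff_smult cc using kj by simp
    then have "degOK (pderiv A * [:\<beta>, \<alpha>:] - smult (real (k - 1) * \<alpha>) A) j"
      by (intro degOK_of degree_diff_le d1 d2)
    then show ?thesis using kj by simp
  qed
qed

fun Aseq :: "(nat \<Rightarrow> real poly) \<Rightarrow> (nat\<Rightarrow>real) \<Rightarrow> (nat\<Rightarrow>real) \<Rightarrow> (nat\<Rightarrow>nat) \<Rightarrow> real \<Rightarrow> nat \<Rightarrow> nat \<Rightarrow> real poly" where
  "Aseq A a b m d 0 = A"
| "Aseq A a b m d (Suc k) = Dop (Aseq A a b m d k) a b m (d - real k)"

lemma fc_seq:
  assumes "\<forall>i<n. \<forall>t\<in>{p<..}. a i * t + b i > 0"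
  shows "\<forall>k. \<forall>x\<in>{p<..}. ((\<lambda>t. fc n (Aseq A a b m d k) a b m (d - real k) t) has_real_derivative
     fc n (Aseq A a b m d (Suc k)) a b m (d - real (Suc k)) x) (at x)"
proof (intro allI ballI)
  fix k x assume x: "x \<in> {p<..}"
  have "(fc n (Aseq A a b m d k) a b m (d - real k) has_real_derivative
     fc n (Dop (Aseq A a b m d k) a b m (d - real k)) a b m (d - real k - 1) x) (at x)"
    using assms x by (intro fc_deriv) auto
  then show "((\<lambda>t. fc n (Aseq A a b m d k) a b m (d - real k) t) has_real_derivative
     fc n (Aseq A a b m d (Suc k)) a b m (d - real (Suc k)) x) (at x)"
    by (simp add: algebra_simps)
qed

definition newA where
  "newA A a b m d i0 i = (if i = i0 then pderiv (A i) * [:b i0, a i0:] - smult (real (m i - 1) * a i0) (A i)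
     else [:b i0, a i0:] * Dop A a b m d i - smult (d * a i0) (A i * [:b i, a i:]))"

definition newm where
  "newm m i0 i = (if i = i0 then m i - 1 else m i)"

lemma step_identity:
  assumes pos: "\<forall>i<n. a i * t + b i > 0" and i0: "i0 < n" "m i0 \<ge> 1"
  shows "(a i0 * t + b i0) * fc n (Dop A a b m d) a b m (d-1) t - d * a i0 * fc n A a b m d t
    = fc n (newA A a b m d i0) a b (newm m i0) (d-1) t"
proof -
  have "(a i0 * t + b i0) * (poly (Dop A a b m d i) t * (a i * t + b i) powr ((d-1) + 1 - real (m i)))
      - d * a i0 * (poly (A i) t * (a i * t + b i) powr (d + 1 - real (m i)))
      = poly (newA A a b m d i0 i) t * (a i * t + b i) powr ((d-1) + 1 - real (newm m i0 i))"
    if i: "i < n" for i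
  proof -
    have l: "a i * t + b i > 0" using pos i by blast
    define P where "P = (a i * t + b i) powr (d - real (m i))"
    have e1: "(a i * t + b i) powr (d + 1 - real (m i)) = (a i * t + b i) * P"
      unfolding P_def using powr_m1[OF l, of "d + 1 - real (m i)"] by simp
    have e2: "(a i * t + b i) powr ((d-1) + 1 - real (m i)) = P" unfolding P_def by simp
    show ?thesis
    proof (cases "i = i0")
      case True
      have e3: "(a i * t + b i) powr ((d-1) + 1 - real (newm m i0 i)) = (a i * t + b i) * P"
      proof -
        have "(d-1) + 1 - real (newm m i0 i) = d + 1 - real (m i)"
          using True i0 unfolding newm_def by (simp add: of_nat_diff)
        then show ?thesis using e1 by (simp only:)
      qed
      show ?thesis unfolding e1 e2 e3 using True i0
        by (simp add: newA_def Dop_def of_nat_diff algebra_simps)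
    next
      case False
      have e3: "(a i * t + b i) powr ((d-1) + 1 - real (newm m i0 i)) = P"
        using False e2 unfolding newm_def by simp
      show ?thesis unfolding e1 e2 e3 using False
        by (simp add: newA_def algebra_simps)
    qed
  qed
  then show ?thesis unfolding fc_def
    by (simp add: sum_distrib_left sum_subtractf[symmetric] mult.assoc)
qed

lemma main_bound:
  "(\<Sum>i<n. m i) = M \<Longrightarrow> (\<forall>i<n. \<forall>t\<in>{p<..}. a i * t + b i > 0) \<Longrightarrow> (\<forall>i<n. degOK (A i) (m i))
   \<Longrightarrow> (\<exists>t\<in>{p<..}. fc n A a b m d t \<noteq> 0) \<Longrightarrow> num_zeros (fc n A a b m d) {p<..} + 1 \<le> enat M"
proof (induction M arbitrary: A m d rule: less_induct)
  case (less M)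
  note pos = less.prems(2) and dok = less.prems(3) and nz = less.prems(4)
  obtain i0 where i0: "i0 < n" "A i0 \<noteq> 0"
  proof (rule ccontr)
    assume "\<not> thesis"
    then have "\<forall>i<n. A i = 0" using that by blast
    then have "\<forall>t. fc n A a b m d t = 0" unfolding fc_def by simp
    then show False using nz by blast
  qed
  have mi0: "m i0 \<ge> 1" using dok i0 unfolding degOK_def by fastforce
  have M1: "M \<ge> 1"
  proof -
    have "m i0 \<le> (\<Sum>i<n. m i)" using i0 by (intro member_le_sum) auto
    then show ?thesis using mi0 less.prems(1) by simp
  qed
  define g where "g k = fc n (Aseq A a b m d k) a b m (d - real k)" for k
  have gseq: "\<forall>k. \<forall>x\<in>{p<..}. (g k has_real_derivative g (Suc k) x) (at x)"
    using fc_seq[OF pos, of A m d] unfolding g_def by simp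
  have g0: "g 0 = fc n A a b m d" unfolding g_def by simp
  have g1: "g 1 = fc n (Dop A a b m d) a b m (d - 1)" unfolding g_def by simp
  define H where "H = fc n (newA A a b m d i0) a b (newm m i0) (d-1)"
  have Hrel: "\<forall>x\<in>{p<..}. H x = (a i0 * x + b i0) * g 1 x - d * a i0 * g 0 x"
  proof
    fix x assume x: "x \<in> {p<..}"
    have "\<forall>i<n. a i * x + b i > 0" using pos x by blast
    then show "H x = (a i0 * x + b i0) * g 1 x - d * a i0 * g 0 x"
      unfolding H_def g0 g1 using step_identity[of n a x b i0 m A d] i0 mi0 by simp
  qed
  have posi0: "\<forall>x\<in>{p<..}. a i0 * x + b i0 > 0" using pos i0 by blast
  note RS = rolle_step[OF gseq posi0 Hrel]
  show ?case
  proof (cases "\<forall>x\<in>{p<..}. H x = 0")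
    case True
    have "{x \<in> {p<..}. fc n A a b m d x = 0} = {}"
    proof (rule ccontr)
      assume "{x \<in> {p<..}. fc n A a b m d x = 0} \<noteq> {}"
      then obtain x where x: "x \<in> {p<..}" "g 0 x = 0" unfolding g0 by auto
      obtain t where t: "t \<in> {p<..}" "fc n A a b m d t \<noteq> 0" using nz by blast
      have "g 0 t = 0" using RS(2)[OF True x(1) t(1) x(2)] .
      then show False using t unfolding g0 by simp
    qed
    then have "num_zeros (fc n A a b m d) {p<..} = 0" unfolding num_zeros_def by (simp only: if_True finite.emptyI sum.empty)
    then show ?thesis using M1 by (simp add: one_enat_def)
  next
    case False
    then have nzH: "\<exists>t\<in>{p<..}. H t \<noteq> 0" by blast
    have sumM: "(\<Sum>i<n. newm m i0 i) = M - 1"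
    proof -
      have "(\<Sum>i<n. newm m i0 i) = newm m i0 i0 + (\<Sum>i\<in>{..<n} - {i0}. newm m i0 i)"
        using i0 by (intro sum.remove) auto
      also have "(\<Sum>i\<in>{..<n} - {i0}. newm m i0 i) = (\<Sum>i\<in>{..<n} - {i0}. m i)"
        unfolding newm_def by (intro sum.cong) auto
      also have "(\<Sum>i<n. m i) = m i0 + (\<Sum>i\<in>{..<n} - {i0}. m i)"
        using i0 by (intro sum.remove) auto
      ultimately show ?thesis using less.prems(1) mi0 unfolding newm_def by simp
    qed
    have dokH: "\<forall>i<n. degOK (newA A a b m d i0 i) (newm m i0 i)"
    proof (intro allI impI)
      fix i assume "i < n"
      then have dA: "degOK (A i) (m i)" using dok by blast
      show "degOK (newA A a b m d i0 i) (newm m i0 i)"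
      proof (cases "i = i0")
        case True
        then show ?thesis unfolding newA_def newm_def using degOK_C[OF dA, of "b i0" "a i0"] by simp
      next
        case False
        then show ?thesis unfolding newA_def newm_def Dop_def
          using degOK_B[OF dA, of "b i0" "a i0" "b i" "a i" d] by simp
      qed
    qed
    have IH: "num_zeros H {p<..} + 1 \<le> enat (M - 1)"
      unfolding H_def
      by (rule less.IH[of "M - 1"]) (use M1 sumM pos dokH nzH in \<open>auto simp: H_def\<close>)
    have "num_zeros (fc n A a b m d) {p<..} + 1 \<le> (num_zeros H {p<..} + 1) + 1"
      using RS(1) unfolding g0 by (intro add_right_mono)
    also have "\<dots> \<le> enat (M - 1) + 1" using IH by (intro add_right_mono)
    also have "\<dots> = enat M" using M1 by (simp add: one_enat_def)
    finally show ?thesis .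
  qed
qed

theorem theorem1p2:
  fixes K :: nat and P :: "nat \<Rightarrow> real poly" and c :: "nat \<Rightarrow> real"
    and F :: "real \<Rightarrow> real" and I :: "real set"
  assumes "K \<ge> 1"
    and "F = (\<lambda>x. poly (P 0) x + (\<Sum>j=1..K. poly (P j) x * (1 / sqrt (x + c j))))"
    and "I = {- Min (c ` {1..K})<..}"
    and "\<exists>x\<in>I. F x \<noteq> 0"
  shows "\<exists>n. num_zeros F I = enat n \<and>
           int n \<le> int K * (Max ((\<lambda>j. deg (P j)) ` {1..K}) + 1) + deg (P 0)"
proof -
  define p where "p = - Min (c ` {1..K})"
  define N where "N = Max ((\<lambda>j. deg (P j)) ` {1..K})"
  define a where "a i = (if i = 0 then 0 else 1::real)" for i :: nat
  define b where "b i = (if i = 0 then 1 else c i)" for i :: nat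
  define m where "m i = (if i = 0 then nat (deg (P 0) + 1) else nat (N + 1))" for i :: nat
  define d where "d = real_of_int N - 1/2"
  have Kne: "{1..K} \<noteq> {}" using assms(1) by auto
  have degge: "deg q \<ge> -1" for q unfolding deg_def by auto
  have degN: "deg (P j) \<le> N" if "j \<in> {1..K}" for j
    unfolding N_def using that by (intro Max_ge) auto
  have N1: "N \<ge> -1" using degN[of 1] degge[of "P 1"] assms(1) by force
  have pos: "\<forall>i<Suc K. \<forall>t\<in>{p<..}. a i * t + b i > 0"
  proof (intro allI impI ballI)
    fix i t assume i: "i < Suc K" and t: "t \<in> {p<..}"
    show "a i * t + b i > 0"
    proof (cases "i = 0")
      case True then show ?thesis unfolding a_def b_def by simp
    next
      case False
      then have "i \<in> {1..K}" using i by auto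
      then have "Min (c ` {1..K}) \<le> c i" by (intro Min_le) auto
      then show ?thesis using t False unfolding a_def b_def p_def by simp
    qed
  qed
  have eqF: "\<forall>x\<in>{p<..}. F x = fc (Suc K) P a b m d x"
  proof
    fix x assume x: "x \<in> {p<..}"
    have set: "{..<Suc K} = insert 0 {1..K}" by auto
    have "fc (Suc K) P a b m d x = poly (P 0) x * (a 0 * x + b 0) powr (d + 1 - real (m 0))
        + (\<Sum>i\<in>{1..K}. poly (P i) x * (a i * x + b i) powr (d + 1 - real (m i)))"
      unfolding fc_def set by (subst sum.insert) auto
    also have "poly (P 0) x * (a 0 * x + b 0) powr (d + 1 - real (m 0)) = poly (P 0) x"
      unfolding a_def b_def by simp
    also have "(\<Sum>i\<in>{1..K}. poly (P i) x * (a i * x + b i) powr (d + 1 - real (m i)))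
        = (\<Sum>j=1..K. poly (P j) x * (1 / sqrt (x + c j)))"
    proof (intro sum.cong refl)
      fix j assume j: "j \<in> {1..K}"
      have jK: "j < Suc K" "j \<noteq> 0" using j by auto
      have "a j * x + b j > 0" using pos x jK(1) by blast
      then have l: "x + c j > 0" using jK(2) unfolding a_def b_def by simp
      have "d + 1 - real (m j) = - (1/2)"
        using j N1 unfolding m_def d_def by (simp add: of_nat_nat)
      then have "(a j * x + b j) powr (d + 1 - real (m j)) = 1 / sqrt (x + c j)"
        using j l unfolding a_def b_def by (simp add: powr_minus_divide powr_half_sqrt)
      then show "poly (P j) x * (a j * x + b j) powr (d + 1 - real (m j)) = poly (P j) x * (1 / sqrt (x + c j))"
        by simp
    qed
    finally show "F x = fc (Suc K) P a b m d x" unfolding assms(2) by simp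
  qed
  have dok: "\<forall>i<Suc K. degOK (P i) (m i)"
  proof (intro allI impI)
    fix i assume i: "i < Suc K"
    show "degOK (P i) (m i)"
    proof (cases "P i = 0")
      case True then show ?thesis by (simp add: degOK_def)
    next
      case False
      show ?thesis
      proof (cases "i = 0")
        case True then show ?thesis using False unfolding degOK_def m_def deg_def by simp
      next
        case i0: False
        then have "i \<in> {1..K}" using i by auto
        then have "int (degree (P i)) \<le> N" using degN False unfolding deg_def by fastforce
        then have "degree (P i) < nat (N + 1)" by linarith
        then show ?thesis using i0 unfolding degOK_def m_def by simp
      qed
    qed
  qed
  have nz: "\<exists>t\<in>{p<..}. fc (Suc K) P a b m d t \<noteq> 0" using assms(4) eqF unfolding assms(3) p_def by auto
  have sumM: "(\<Sum>i<Suc K. m i) = nat (deg (P 0) + 1) + K * nat (N + 1)"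
  proof -
    have set: "{..<Suc K} = insert 0 {1..K}" by auto
    show ?thesis unfolding set by (subst sum.insert) (auto simp: m_def)
  qed
  have bnd: "num_zeros (fc (Suc K) P a b m d) {p<..} + 1 \<le> enat (nat (deg (P 0) + 1) + K * nat (N + 1))"
    using main_bound[OF sumM pos dok nz] .
  have eqZ: "num_zeros F I = num_zeros (fc (Suc K) P a b m d) {p<..}"
    unfolding assms(3) p_def[symmetric] by (rule num_zeros_cong) (use eqF in auto)
  have "num_zeros F I \<noteq> \<infinity>"
  proof
    assume "num_zeros F I = \<infinity>"
    then show False using bnd eqZ by simp
  qed
  then obtain z where z: "num_zeros F I = enat z" by auto
  have "z + 1 \<le> nat (deg (P 0) + 1) + K * nat (N + 1)"
  proof -
    have "enat z + enat 1 \<le> enat (nat (deg (P 0) + 1) + K * nat (N + 1))"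
      using bnd unfolding eqZ[symmetric] z by (simp add: one_enat_def)
    then show ?thesis by simp
  qed
  then have "int (Suc z) \<le> int (nat (deg (P 0) + 1) + K * nat (N + 1))"
    by (simp only: of_nat_le_iff)
  moreover have "int (nat (deg (P 0) + 1)) = deg (P 0) + 1" using degge[of "P 0"] by simp
  moreover have "int (nat (N + 1)) = N + 1" using N1 by simp
  ultimately have "int z \<le> int K * (N + 1) + deg (P 0)"
    by (simp only: of_nat_add of_nat_mult of_nat_Suc)
  then show ?thesis using z unfolding N_def by blast
qed

end
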